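(* Let $\xi:[a,b]\to\mathbb{R}^3$ be as in the context with $k>0$, $\tau\neq0$ and $\sigma\neq0$ on $[a,b]$, and let $e$ be its evolute. Then $$\int_a^b k_e\,\|e'\|\,dt=\int_a^b|\tau|\,dt,\qquad \int_a^b \tau_e\,\|e'\|\,dt=\int_a^b \operatorname{sgn}(\sigma)\,k\,dt .$$ That is, the total curvature of the evolute equals the total absolute torsion of $\xi$, and the total torsion of the evolute equals the total curvature of $\xi$ taken with the sign of $\sigma$.
   Context: $\xi$ is a smooth arclength-parametrized space curve with curvature $k>0$, $r=1/k$, torsion $\tau$ and Frenet frame $(\mathbf{t},\mathbf{n},\mathbf{b})$. Its evolute is $e=\xi+r\mathbf{n}+\frac{r'}{\tau}\mathbf{b}$, and $\sigma=r\tau+\left(\frac{r'}{\tau}\right)'$. Here $k_e,\tau_e$ denote the curvature and torsion of $e$ at $e(t)$. *)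

theory Defs
  imports "HOL-Analysis.Analysis"
begin

definition vd :: "(real \<Rightarrow> 'a::real_normed_vector) \<Rightarrow> real \<Rightarrow> 'a" where
  "vd f = (\<lambda>t. vector_derivative f (at t))"

definition smooth_on :: "real set \<Rightarrow> (real \<Rightarrow> 'a::real_normed_vector) \<Rightarrow> bool" where
  "smooth_on S f \<longleftrightarrow> (\<forall>m. \<forall>t\<in>S. ((vd ^^ m) f) differentiable (at t))"

text \<open>Frenet apparatus of an arclength-parametrized space curve xi.\<close>
definition fr_t :: "(real \<Rightarrow> real^3) \<Rightarrow> real \<Rightarrow> real^3" where
  "fr_t xi = vd xi"

definition fr_k :: "(real \<Rightarrow> real^3) \<Rightarrow> real \<Rightarrow> real" where
  "fr_k xi t = norm (vd (vd xi) t)"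

definition fr_n :: "(real \<Rightarrow> real^3) \<Rightarrow> real \<Rightarrow> real^3" where
  "fr_n xi t = (1 / fr_k xi t) *\<^sub>R vd (vd xi) t"

definition fr_b :: "(real \<Rightarrow> real^3) \<Rightarrow> real \<Rightarrow> real^3" where
  "fr_b xi t = cross3 (fr_t xi t) (fr_n xi t)"

text \<open>Torsion, with the Frenet convention n' = -k t + tau b (so b' = - tau n).\<close>
definition fr_tau :: "(real \<Rightarrow> real^3) \<Rightarrow> real \<Rightarrow> real" where
  "fr_tau xi t = vd (fr_n xi) t \<bullet> fr_b xi t"

definition fr_r :: "(real \<Rightarrow> real^3) \<Rightarrow> real \<Rightarrow> real" where
  "fr_r xi t = 1 / fr_k xi t"

definition evolute :: "(real \<Rightarrow> real^3) \<Rightarrow> real \<Rightarrow> real^3" where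
  "evolute xi t = xi t + fr_r xi t *\<^sub>R fr_n xi t
      + (deriv (fr_r xi) t / fr_tau xi t) *\<^sub>R fr_b xi t"

definition fr_sigma :: "(real \<Rightarrow> real^3) \<Rightarrow> real \<Rightarrow> real" where
  "fr_sigma xi t = fr_r xi t * fr_tau xi t + deriv (\<lambda>s. deriv (fr_r xi) s / fr_tau xi s) t"

definition curvature :: "(real \<Rightarrow> real^3) \<Rightarrow> real \<Rightarrow> real" where
  "curvature \<gamma> t = norm (cross3 (vd \<gamma> t) (vd (vd \<gamma>) t)) / norm (vd \<gamma> t) ^ 3"

definition torsion :: "(real \<Rightarrow> real^3) \<Rightarrow> real \<Rightarrow> real" where
  "torsion \<gamma> t = (cross3 (vd \<gamma> t) (vd (vd \<gamma>) t) \<bullet> vd (vd (vd \<gamma>)) t)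
      / norm (cross3 (vd \<gamma> t) (vd (vd \<gamma>) t)) ^ 2"

end

theory Submission
  imports Defs
begin


lemma vd_cong:
  assumes "open U" "t \<in> U" "\<And>s. s \<in> U \<Longrightarrow> f s = g s"
  shows "vd f t = vd g t"
proof -
  have "\<And>f'. (f has_vector_derivative f') (at t) \<longleftrightarrow> (g has_vector_derivative f') (at t)"
    using assms has_vector_derivative_transform_within_open by metis
  then show ?thesis unfolding vd_def vector_derivative_def by simp
qed

lemma vdpow_cong:
  assumes "open U" "\<And>s. s \<in> U \<Longrightarrow> f s = g s" "t \<in> U"
  shows "(vd ^^ m) f t = (vd ^^ m) g t"
  using assms(3)
proof (induction m arbitrary: t)
  case 0 then show ?case using assms by simp
next
  case (Suc m)
  then show ?case using vd_cong[OF assms(1) Suc(2), of "(vd ^^ m) f" "(vd ^^ m) g"] by simp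
qed

lemma diff_cong:
  fixes f g :: "real \<Rightarrow> 'a::real_normed_vector"
  assumes "open U" "t \<in> U" "\<And>s. s \<in> U \<Longrightarrow> f s = g s" "f differentiable (at t)"
  shows "g differentiable (at t)"
  using assms vector_derivative_works has_vector_derivative_transform_within_open differentiableI_vector
  by metis

definition DD :: "real set \<Rightarrow> nat \<Rightarrow> (real \<Rightarrow> 'a::real_normed_vector) \<Rightarrow> bool" where
  "DD U m f \<longleftrightarrow> (\<forall>t\<in>U. ((vd ^^ m) f) differentiable (at t))"

lemma DD_cong:
  assumes "open U" "\<And>s. s \<in> U \<Longrightarrow> f s = g s" "DD U m f"
  shows "DD U m g"
  unfolding DD_def
proof
  fix t assume t: "t \<in> U"
  have "(vd^^m) f differentiable at t" using assms(3) t by (simp add: DD_def)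
  then show "(vd^^m) g differentiable at t"
    by (rule diff_cong[OF assms(1) t, rotated]) (rule vdpow_cong[OF assms(1,2)], auto)
qed

lemma DD_Suc: "DD U (Suc m) f = DD U m (vd f)"
  unfolding DD_def by (simp add: funpow_Suc_right del: funpow.simps)

lemma vd_has: "f differentiable (at t) \<Longrightarrow> (f has_vector_derivative vd f t) (at t)"
  unfolding vd_def using vector_derivative_works by blast

lemma vd_eqI: "(f has_vector_derivative f') (at t) \<Longrightarrow> vd f t = f'"
  using vd_has differentiableI_vector vector_derivative_unique_at by metis

lemma vdpow_add:
  fixes f g :: "real \<Rightarrow> 'a::real_normed_vector"
  assumes "open U" "\<forall>j<m. DD U j f \<and> DD U j g" "t \<in> U"
  shows "(vd ^^ m) (\<lambda>s. f s + g s) t = (vd ^^ m) f t + (vd ^^ m) g t"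
  using assms(2,3)
proof (induction m arbitrary: t)
  case 0 then show ?case by simp
next
  case (Suc m)
  have IH: "\<And>s. s \<in> U \<Longrightarrow> (vd ^^ m) (\<lambda>s. f s + g s) s = (vd ^^ m) f s + (vd ^^ m) g s"
    using Suc by auto
  have "(vd ^^ Suc m) (\<lambda>s. f s + g s) t = vd (\<lambda>s. (vd ^^ m) f s + (vd ^^ m) g s) t"
    using vd_cong[OF assms(1) Suc(3) IH] by simp
  also have "\<dots> = vd ((vd ^^ m) f) t + vd ((vd ^^ m) g) t"
    apply (rule vd_eqI)
    apply (rule has_vector_derivative_add)
    using Suc(2,3) unfolding DD_def by (auto intro: vd_has)
  finally show ?case by simp
qed

lemma DD_add:
  fixes f g :: "real \<Rightarrow> 'a::real_normed_vector"
  assumes "open U" "\<forall>j\<le>m. DD U j f \<and> DD U j g"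
  shows "DD U m (\<lambda>s. f s + g s)"
  unfolding DD_def
proof
  fix t assume t: "t \<in> U"
  have "((\<lambda>s. (vd ^^ m) f s + (vd ^^ m) g s)) differentiable (at t)"
    using assms t unfolding DD_def by auto
  then show "(vd ^^ m) (\<lambda>s. f s + g s) differentiable (at t)"
    apply (rule diff_cong[OF assms(1) t, rotated])
    by (subst vdpow_add[OF assms(1)]) (use assms(2) in auto)
qed

lemma DD_bilinear:
  fixes f :: "real \<Rightarrow> 'a::real_normed_vector" and g :: "real \<Rightarrow> 'b::real_normed_vector"
  assumes P: "bounded_bilinear (P :: 'a \<Rightarrow> 'b \<Rightarrow> 'c::real_normed_vector)" and U: "open U"
  shows "\<forall>j\<le>m. DD U j f \<and> DD U j g \<Longrightarrow> DD U m (\<lambda>s. P (f s) (g s))"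
proof (induction m arbitrary: f g rule: less_induct)
  case (less m)
  show ?case
  proof (cases m)
    case 0
    then show ?thesis using less(2) unfolding DD_def
      by (auto intro!: differentiableI_vector[OF bounded_bilinear.has_vector_derivative[OF P vd_has vd_has]])
  next
    case (Suc n)
    have e: "vd (\<lambda>s. P (f s) (g s)) s = P (f s) (vd g s) + P (vd f s) (g s)" if "s \<in> U" for s
      apply (rule vd_eqI)
      apply (rule bounded_bilinear.has_vector_derivative[OF P])
      using less(2)[rule_format, of 0] that unfolding DD_def by (auto intro!: vd_has)
    have "DD U n (\<lambda>s. P (f s) (vd g s) + P (vd f s) (g s))"
    proof (rule DD_add[OF U], intro allI impI conjI)
      fix j assume j: "j \<le> n"
      have h: "\<forall>i\<le>j. DD U i f \<and> DD U i (vd g) \<and> DD U i (vd f) \<and> DD U i g"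
        using less(2) j Suc by (auto simp: DD_Suc[symmetric])
      show "DD U j (\<lambda>s. P (f s) (vd g s))"
        by (rule less(1)) (use j Suc h in auto)
      show "DD U j (\<lambda>s. P (vd f s) (g s))"
        by (rule less(1)) (use j Suc h in auto)
    qed
    then have "DD U n (vd (\<lambda>s. P (f s) (g s)))"
      by (rule DD_cong[OF U, rotated]) (use e in auto)
    then show ?thesis using Suc by (simp add: DD_Suc)
  qed
qed



lemma vd_const: "vd (\<lambda>_. c) = (\<lambda>_. 0)"
  by (rule ext, rule vd_eqI, simp)

lemma vdpow_const: "(vd ^^ Suc m) (\<lambda>_. c) = (\<lambda>_. 0)"
  by (induction m) (auto simp: vd_const)

lemma DD_const: "DD U m (\<lambda>_. c)"
  by (cases m) (auto simp: DD_def vdpow_const simp del: funpow.simps)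

lemma real_vd_has: "(f::real\<Rightarrow>real) differentiable (at t) \<Longrightarrow> (f has_real_derivative vd f t) (at t)"
  using vd_has has_real_derivative_iff_has_vector_derivative by blast

lemma real_diffI: "(f has_real_derivative D) (at t) \<Longrightarrow> f differentiable (at t)"
  using differentiableI_vector has_real_derivative_iff_has_vector_derivative by blast

lemma real_vd_eqI: "(f has_real_derivative D) (at t) \<Longrightarrow> vd f t = D"
  using vd_eqI has_real_derivative_iff_has_vector_derivative by blast

lemma DD_comp:
  fixes \<phi> f :: "real \<Rightarrow> real"
  assumes U: "open U" and fV: "\<forall>s\<in>U. f s \<in> V"
  shows "\<forall>j\<le>m. DD V j \<phi> \<Longrightarrow> \<forall>j\<le>m. DD U j f \<Longrightarrow> DD U m (\<lambda>s. \<phi> (f s))"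
proof (induction m arbitrary: \<phi> rule: less_induct)
  case (less m)
  have d0: "\<phi> differentiable (at (f s))" "f differentiable (at s)" if "s \<in> U" for s
    using less(2)[rule_format, of 0] less(3)[rule_format, of 0] fV that unfolding DD_def by auto
  have ch: "((\<lambda>s. \<phi> (f s)) has_real_derivative vd \<phi> (f s) * vd f s) (at s)" if "s \<in> U" for s
    using DERIV_chain2[OF real_vd_has real_vd_has] d0[OF that] by blast
  show ?case
  proof (cases m)
    case 0
    then show ?thesis using ch unfolding DD_def by (auto intro: real_diffI)
  next
    case (Suc n)
    have "DD U n (\<lambda>s. vd \<phi> (f s) * vd f s)"
    proof (rule DD_bilinear[OF bounded_bilinear_mult U], intro allI impI conjI)
      fix j assume j: "j \<le> n"
      show "DD U j (\<lambda>s. vd \<phi> (f s))"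
        by (rule less(1)) (use j Suc less(2,3) in \<open>auto simp: DD_Suc[symmetric]\<close>)
      show "DD U j (vd f)" using j Suc less(3) by (auto simp: DD_Suc[symmetric])
    qed
    then have "DD U n (vd (\<lambda>s. \<phi> (f s)))"
      by (rule DD_cong[OF U, rotated]) (use ch real_vd_eqI in metis)
    then show ?thesis using Suc by (simp add: DD_Suc)
  qed
qed

lemma DD_inverse: "DD (-{0::real}) m inverse"
proof (induction m rule: less_induct)
  case (less m)
  have ch: "(inverse has_real_derivative (-1) * (inverse x * inverse x)) (at x)" if "x \<in> -{0}" for x :: real
    using DERIV_inverse[of x UNIV] that by (simp add: power2_eq_square)
  show ?case
  proof (cases m)
    case 0
    then show ?thesis using ch unfolding DD_def by (auto intro: real_diffI)
  next
    case (Suc n)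
    have "DD (-{0}) n (\<lambda>x::real. (-1) * (inverse x * inverse x))"
      by (rule DD_bilinear[OF bounded_bilinear_mult open_Compl[OF closed_singleton]])
         (use less Suc in \<open>auto intro!: DD_const DD_bilinear[OF bounded_bilinear_mult open_Compl[OF closed_singleton]]\<close>)
    then have "DD (-{0}) n (vd inverse)"
      by (rule DD_cong[OF open_Compl[OF closed_singleton], rotated]) (use ch real_vd_eqI in metis)
    then show ?thesis using Suc by (simp add: DD_Suc)
  qed
qed

lemma DD_sqrt: "DD {0::real<..} m sqrt"
proof (induction m rule: less_induct)
  case (less m)
  have ch: "(sqrt has_real_derivative (1/2) * inverse (sqrt x)) (at x)" if "x \<in> {0<..}" for x :: real
    using DERIV_real_sqrt[of x] that by simp
  show ?case
  proof (cases m)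
    case 0
    then show ?thesis using ch unfolding DD_def by (auto intro: real_diffI)
  next
    case (Suc n)
    have "DD {0<..} n (\<lambda>x::real. (1/2) * inverse (sqrt x))"
    proof (rule DD_bilinear[OF bounded_bilinear_mult open_greaterThan], intro allI impI conjI)
      fix j assume j: "j \<le> n"
      show "DD {0<..} j (\<lambda>_. 1/2::real)" by (rule DD_const)
      show "DD {0<..} j (\<lambda>x. inverse (sqrt x))"
        by (rule DD_comp[OF open_greaterThan, where V="-{0}"]) (use j Suc less DD_inverse in auto)
    qed
    then have "DD {0<..} n (vd sqrt)"
      by (rule DD_cong[OF open_greaterThan, rotated]) (use ch real_vd_eqI in metis)
    then show ?thesis using Suc by (simp add: DD_Suc)
  qed
qed

definition SM :: "real set \<Rightarrow> (real \<Rightarrow> 'a::real_normed_vector) \<Rightarrow> bool" where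
  "SM U f \<longleftrightarrow> (\<forall>m. DD U m f)"

lemma SM_bil:
  assumes "bounded_bilinear P" "open U" "SM U f" "SM U g"
  shows "SM U (\<lambda>s. P (f s) (g s))"
  using assms DD_bilinear unfolding SM_def by blast

lemma SM_add:
  assumes "open U" "SM U f" "SM U g"
  shows "SM U (\<lambda>s. f s + g s)"
  using assms DD_add unfolding SM_def by blast

lemma SM_vd: "SM U f \<Longrightarrow> SM U (vd f)"
  unfolding SM_def using DD_Suc by blast

lemma SM_cong: "open U \<Longrightarrow> SM U f \<Longrightarrow> (\<And>s. s \<in> U \<Longrightarrow> f s = g s) \<Longrightarrow> SM U g"
  unfolding SM_def using DD_cong by blast

lemma SM_const: "SM U (\<lambda>_. c)"
  unfolding SM_def using DD_const by blast

lemma SM_diff: "SM U f \<Longrightarrow> t \<in> U \<Longrightarrow> f differentiable (at t)"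
  unfolding SM_def DD_def by (metis funpow_0)

lemma SM_inverse:
  fixes f :: "real \<Rightarrow> real"
  assumes "open U" "SM U f" "\<forall>s\<in>U. f s \<noteq> 0"
  shows "SM U (\<lambda>s. inverse (f s))"
  unfolding SM_def
  by (intro allI DD_comp[OF assms(1), where V="-{0}"]) (use assms DD_inverse in \<open>auto simp: SM_def\<close>)

lemma SM_sqrt:
  fixes f :: "real \<Rightarrow> real"
  assumes "open U" "SM U f" "\<forall>s\<in>U. f s > 0"
  shows "SM U (\<lambda>s. sqrt (f s))"
  unfolding SM_def
  by (intro allI DD_comp[OF assms(1), where V="{0<..}"]) (use assms DD_sqrt in \<open>auto simp: SM_def\<close>)

lemma SM_norm:
  fixes K :: "real \<Rightarrow> 'a::real_inner"
  assumes "open U" "SM U K" "\<forall>s\<in>U. K s \<noteq> 0"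
  shows "SM U (\<lambda>s. norm (K s))"
proof -
  have "SM U (\<lambda>s. sqrt (K s \<bullet> K s))"
    by (rule SM_sqrt[OF assms(1) SM_bil[OF bounded_bilinear_inner assms(1,2,2)]]) (use assms(3) in auto)
  then show ?thesis by (rule SM_cong[OF assms(1)]) (simp add: norm_eq_sqrt_inner)
qed

lemma SM_divide:
  fixes f g :: "real \<Rightarrow> real"
  assumes "open U" "SM U f" "SM U g" "\<forall>s\<in>U. g s \<noteq> 0"
  shows "SM U (\<lambda>s. f s / g s)"
  using SM_bil[OF bounded_bilinear_mult assms(1,2) SM_inverse[OF assms(1,3,4)]]
  by (simp add: divide_inverse)



lemma V1: "cross3 x (cross3 y z) = (x \<bullet> z) *\<^sub>R y - (x \<bullet> y) *\<^sub>R z" for x y z :: "real^3"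
  by (simp add: cross3_simps forall_3)
lemma V2: "cross3 (cross3 x y) z = (x \<bullet> z) *\<^sub>R y - (y \<bullet> z) *\<^sub>R x" for x y z :: "real^3"
  by (simp add: cross3_simps forall_3)
lemma Cr: "(x \<bullet> cross3 y z) *\<^sub>R v = (v \<bullet> cross3 y z) *\<^sub>R x + (v \<bullet> cross3 z x) *\<^sub>R y + (v \<bullet> cross3 x y) *\<^sub>R z" for x y z v :: "real^3"
  by (simp add: cross3_simps forall_3)
lemma V3: "cross3 (c *\<^sub>R x) (d *\<^sub>R x - f *\<^sub>R y) = (- (c*f)) *\<^sub>R cross3 x y" for x y :: "real^3"
  by (simp add: cross3_simps forall_3)
lemma V4: "cross3 x (c *\<^sub>R y - d *\<^sub>R x) = c *\<^sub>R cross3 x y" for x y :: "real^3"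
  by (simp add: cross3_simps forall_3)
lemma bb_cross: "bounded_bilinear (cross3 :: real^3 \<Rightarrow> real^3 \<Rightarrow> real^3)"
  using bilinear_conv_bounded_bilinear bilinear_cross by blast

lemma deriv_eq_vd: "deriv (f::real\<Rightarrow>real) = vd f"
  by (rule ext) (simp add: deriv_def vd_def vector_derivative_def has_real_derivative_iff_has_vector_derivative)

lemma inner_const_deriv:
  fixes f g :: "real \<Rightarrow> 'a::real_inner"
  assumes "open U" "t \<in> U" "\<forall>s\<in>U. f s \<bullet> g s = c" "f differentiable (at t)" "g differentiable (at t)"
  shows "f t \<bullet> vd g t + vd f t \<bullet> g t = 0"
proof -
  have 1: "((\<lambda>s. f s \<bullet> g s) has_vector_derivative (f t \<bullet> vd g t + vd f t \<bullet> g t)) (at t)"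
    by (rule bounded_bilinear.has_vector_derivative[OF bounded_bilinear_inner vd_has vd_has]) (use assms in auto)
  have 2: "((\<lambda>s. f s \<bullet> g s) has_vector_derivative 0) (at t)"
    by (rule has_vector_derivative_transform_within_open[OF has_vector_derivative_const assms(1,2)])
       (use assms(3) in auto)
  show ?thesis using vector_derivative_unique_at[OF 1 2] .
qed


theorem mainTheorem6:
  fixes xi :: "real \<Rightarrow> real^3" and S :: "real set" and a b :: real
  assumes "open S" and "{a..b} \<subseteq> S"
    and "smooth_on S xi"
    and "\<forall>t\<in>{a..b}. norm (vd xi t) = 1"
    and "\<forall>t\<in>{a..b}. fr_k xi t > 0"
    and "\<forall>t\<in>{a..b}. fr_tau xi t \<noteq> 0"
    and "\<forall>t\<in>{a..b}. fr_sigma xi t \<noteq> 0"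
  shows "integral {a..b} (\<lambda>t. curvature (evolute xi) t * norm (vd (evolute xi) t))
           = integral {a..b} (\<lambda>t. \<bar>fr_tau xi t\<bar>)
       \<and> integral {a..b} (\<lambda>t. torsion (evolute xi) t * norm (vd (evolute xi) t))
           = integral {a..b} (\<lambda>t. sgn (fr_sigma xi t) * fr_k xi t)"
proof -
  define U where "U = {a<..<b}"
  have U: "open U" by (simp add: U_def)
  have UAB: "U \<subseteq> {a..b}" by (auto simp: U_def)
  have US: "U \<subseteq> S" using assms(2) UAB by auto
  have unit: "\<And>s. s \<in> U \<Longrightarrow> norm (vd xi s) = 1" using assms(4) UAB by auto
  have kpos: "\<And>s. s \<in> U \<Longrightarrow> fr_k xi s > 0" using assms(5) UAB by auto
  have taunz: "\<And>s. s \<in> U \<Longrightarrow> fr_tau xi s \<noteq> 0" using assms(6) UAB by auto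
  have signz: "\<And>s. s \<in> U \<Longrightarrow> fr_sigma xi s \<noteq> 0" using assms(7) UAB by auto
  have SMxi: "SM U xi" using assms(3) US unfolding smooth_on_def SM_def DD_def by blast
  define T where "T = vd xi"
  define K where "K = vd T"
  define k where "k = fr_k xi"
  define n where "n = fr_n xi"
  define Bn where "Bn = fr_b xi"
  define tau where "tau = fr_tau xi"
  define r where "r = fr_r xi"
  define q where "q = (\<lambda>s. vd r s / tau s)"
  define sig where "sig = fr_sigma xi"
  define e where "e = evolute xi"
  have SMT: "SM U T" using SMxi by (simp add: T_def SM_vd)
  have SMK: "SM U K" using SMT by (simp add: K_def SM_vd)
  have k_eq: "k = (\<lambda>s. norm (K s))" by (rule ext) (simp add: k_def fr_k_def K_def T_def)
  have kpos': "\<And>s. s \<in> U \<Longrightarrow> k s > 0" using kpos by (simp add: k_def)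
  have Knz: "\<forall>s\<in>U. K s \<noteq> 0" using kpos' k_eq by fastforce
  have SMk: "SM U k" using SM_norm[OF U SMK Knz] k_eq by simp
  have SMik: "SM U (\<lambda>s. 1 / k s)"
    by (rule SM_divide[OF U SM_const SMk]) (use kpos' in force)
  have n_eq: "n = (\<lambda>s. (1 / k s) *\<^sub>R K s)" by (rule ext) (simp add: n_def fr_n_def K_def T_def k_def)
  have SMn: "SM U n" unfolding n_eq by (rule SM_bil[OF bounded_bilinear_scaleR U SMik SMK])
  have B_eq: "Bn = (\<lambda>s. cross3 (T s) (n s))" by (rule ext) (simp add: Bn_def fr_b_def fr_t_def T_def n_def)
  have SMB: "SM U Bn" unfolding B_eq by (rule SM_bil[OF bb_cross U SMT SMn])
  have tau_eq: "tau = (\<lambda>s. vd n s \<bullet> Bn s)" by (rule ext) (simp add: tau_def fr_tau_def n_def Bn_def)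
  have SMtau: "SM U tau" unfolding tau_eq by (rule SM_bil[OF bounded_bilinear_inner U SM_vd[OF SMn] SMB])
  have taunz': "\<And>s. s \<in> U \<Longrightarrow> tau s \<noteq> 0" using taunz by (simp add: tau_def)
  have r_eq: "r = (\<lambda>s. 1 / k s)" by (rule ext) (simp add: r_def fr_r_def k_def)
  have SMr: "SM U r" unfolding r_eq by (rule SMik)
  have SMq: "SM U q" unfolding q_def by (rule SM_divide[OF U SM_vd[OF SMr] SMtau]) (use taunz' in auto)
  have e_eq: "e = (\<lambda>s. xi s + r s *\<^sub>R n s + q s *\<^sub>R Bn s)"
    by (rule ext) (simp add: e_def evolute_def q_def deriv_eq_vd r_def n_def tau_def Bn_def)
  have sig_eq: "sig = (\<lambda>s. r s * tau s + vd q s)"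
    by (rule ext) (simp add: sig_def fr_sigma_def q_def deriv_eq_vd r_def tau_def)
  have SMsig: "SM U sig" unfolding sig_eq
    by (rule SM_add[OF U SM_bil[OF bounded_bilinear_mult U SMr SMtau] SM_vd[OF SMq]])
  have signz': "\<And>s. s \<in> U \<Longrightarrow> sig s \<noteq> 0" using signz by (simp add: sig_def)

  have dxi: "\<And>s. s \<in> U \<Longrightarrow> (xi has_vector_derivative T s) (at s)"
    using SM_diff[OF SMxi] vd_has T_def by blast
  have dT: "\<And>s. s \<in> U \<Longrightarrow> (T has_vector_derivative K s) (at s)"
    using SM_diff[OF SMT] vd_has K_def by blast
  have dn: "\<And>s. s \<in> U \<Longrightarrow> (n has_vector_derivative vd n s) (at s)"
    using SM_diff[OF SMn] vd_has by blast
  have dB: "\<And>s. s \<in> U \<Longrightarrow> (Bn has_vector_derivative vd Bn s) (at s)"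
    using SM_diff[OF SMB] vd_has by blast
  have dr: "\<And>s. s \<in> U \<Longrightarrow> (r has_vector_derivative vd r s) (at s)"
    using SM_diff[OF SMr] vd_has by blast
  have dq: "\<And>s. s \<in> U \<Longrightarrow> (q has_vector_derivative vd q s) (at s)"
    using SM_diff[OF SMq] vd_has by blast
  have dsig: "\<And>s. s \<in> U \<Longrightarrow> (sig has_vector_derivative vd sig s) (at s)"
    using SM_diff[OF SMsig] vd_has by blast
  have dsig': "\<And>s. s \<in> U \<Longrightarrow> (vd sig has_vector_derivative vd (vd sig) s) (at s)"
    using SM_diff[OF SM_vd[OF SMsig]] vd_has by blast
  have dtau: "\<And>s. s \<in> U \<Longrightarrow> (tau has_vector_derivative vd tau s) (at s)"
    using SM_diff[OF SMtau] vd_has by blast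

  have TT: "T s \<bullet> T s = 1" if "s \<in> U" for s
    using unit[OF that] by (simp add: T_def norm_eq_1)
  have TK: "T s \<bullet> K s = 0" if "s \<in> U" for s
  proof -
    have "T s \<bullet> vd T s + vd T s \<bullet> T s = 0"
      by (rule inner_const_deriv[OF U that, of T T 1]) (use TT SM_diff[OF SMT] that in auto)
    then show ?thesis by (simp add: K_def inner_commute)
  qed
  have KK: "K s \<bullet> K s = k s * k s" if "s \<in> U" for s
    by (simp add: k_eq power2_eq_square[symmetric] power2_norm_eq_inner)
  have Kn: "K s = k s *\<^sub>R n s" if "s \<in> U" for s
    using kpos'[OF that] by (simp add: n_eq)
  have nn: "n s \<bullet> n s = 1" if "s \<in> U" for s
    using kpos'[OF that] KK[OF that] by (simp add: n_eq)
  have nT: "n s \<bullet> T s = 0" if "s \<in> U" for s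
    using TK[OF that] by (simp add: n_eq inner_commute)
  have nK: "n s \<bullet> K s = k s" if "s \<in> U" for s
    using kpos'[OF that] KK[OF that] by (simp add: n_eq)
  have BT: "Bn s \<bullet> T s = 0" "Bn s \<bullet> n s = 0" if "s \<in> U" for s
    by (simp_all add: B_eq dot_cross_self inner_commute)
  have nB: "cross3 (n s) (Bn s) = T s" "cross3 (Bn s) (T s) = n s" if "s \<in> U" for s
    using nn[OF that] nT[OF that] TT[OF that] by (simp_all add: B_eq V1 V2 inner_commute)
  have BB: "Bn s \<bullet> Bn s = 1" if "s \<in> U" for s
  proof -
    have "(norm (Bn s))\<^sup>2 + (T s \<bullet> n s)\<^sup>2 = (norm (T s) * norm (n s))\<^sup>2"
      unfolding B_eq by (rule norm_cross_dot)
    moreover have "norm (T s) = 1" "norm (n s) = 1" using TT[OF that] nn[OF that] by (simp_all add: norm_eq_1)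
    ultimately have "(norm (Bn s))\<^sup>2 = 1" using nT[OF that] by (simp add: inner_commute)
    then show ?thesis by (simp add: power2_norm_eq_inner)
  qed
  have Nfr: "vd n s = (- k s) *\<^sub>R T s + tau s *\<^sub>R Bn s" if s: "s \<in> U" for s
  proof -
    have Nn: "n s \<bullet> vd n s = 0"
    proof -
      have "n s \<bullet> vd n s + vd n s \<bullet> n s = 0"
        by (rule inner_const_deriv[OF U s, of n n 1]) (use nn SM_diff[OF SMn] s in auto)
      then show ?thesis by (simp add: inner_commute)
    qed
    have NT: "vd n s \<bullet> T s = - k s"
    proof -
      have "n s \<bullet> vd T s + vd n s \<bullet> T s = 0"
        by (rule inner_const_deriv[OF U s, of n T 0]) (use nT SM_diff[OF SMn] SM_diff[OF SMT] s in auto)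
      then show ?thesis using nK[OF s] by (simp add: K_def)
    qed
    have NB: "vd n s \<bullet> Bn s = tau s" by (simp add: tau_eq)
    have "(T s \<bullet> cross3 (n s) (Bn s)) *\<^sub>R vd n s = (vd n s \<bullet> cross3 (n s) (Bn s)) *\<^sub>R T s
        + (vd n s \<bullet> cross3 (Bn s) (T s)) *\<^sub>R n s + (vd n s \<bullet> cross3 (T s) (n s)) *\<^sub>R Bn s"
      by (rule Cr)
    moreover have "cross3 (T s) (n s) = Bn s" by (simp add: B_eq)
    ultimately show ?thesis using nB[OF s] TT[OF s] NT NB Nn
      by (simp add: inner_commute)
  qed
  have Bfr: "vd Bn s = (- tau s) *\<^sub>R n s" if s: "s \<in> U" for s
  proof -
    have "(Bn has_vector_derivative (cross3 (T s) (vd n s) + cross3 (K s) (n s))) (at s)"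
      unfolding B_eq by (rule bounded_bilinear.has_vector_derivative[OF bb_cross dT[OF s] dn[OF s]])
    then have "vd Bn s = cross3 (T s) (vd n s) + cross3 (K s) (n s)" by (rule vd_eqI)
    also have "\<dots> = (- tau s) *\<^sub>R n s"
      using Kn[OF s] Nfr[OF s] TT[OF s] nT[OF s]
      by (simp add: B_eq V4 V1 inner_commute cross_mult_left)
    finally show ?thesis .
  qed
  have e1: "vd e s = sig s *\<^sub>R Bn s" if s: "s \<in> U" for s
  proof -
    have "(e has_vector_derivative (T s + (r s *\<^sub>R vd n s + vd r s *\<^sub>R n s) + (q s *\<^sub>R vd Bn s + vd q s *\<^sub>R Bn s))) (at s)"
      unfolding e_eq
      by (intro has_vector_derivative_add dxi[OF s]
          bounded_bilinear.has_vector_derivative[OF bounded_bilinear_scaleR dr[OF s] dn[OF s]]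
          bounded_bilinear.has_vector_derivative[OF bounded_bilinear_scaleR dq[OF s] dB[OF s]])
    then have "vd e s = T s + (r s *\<^sub>R vd n s + vd r s *\<^sub>R n s) + (q s *\<^sub>R vd Bn s + vd q s *\<^sub>R Bn s)"
      by (rule vd_eqI)
    also have "\<dots> = (1 - r s * k s) *\<^sub>R T s + (vd r s - q s * tau s) *\<^sub>R n s + (r s * tau s + vd q s) *\<^sub>R Bn s"
      unfolding Nfr[OF s] Bfr[OF s] by (simp add: algebra_simps)
    also have "\<dots> = sig s *\<^sub>R Bn s"
      using kpos'[OF s] taunz'[OF s] by (simp add: r_eq q_def sig_eq)
    finally show ?thesis .
  qed
  define E2 where "E2 = (\<lambda>s. vd sig s *\<^sub>R Bn s - (sig s * tau s) *\<^sub>R n s)"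
  have e2: "vd (vd e) s = E2 s" if s: "s \<in> U" for s
  proof -
    have "vd (vd e) s = vd (\<lambda>s. sig s *\<^sub>R Bn s) s"
      by (rule vd_cong[OF U s]) (rule e1)
    also have "\<dots> = sig s *\<^sub>R vd Bn s + vd sig s *\<^sub>R Bn s"
      by (rule vd_eqI, rule bounded_bilinear.has_vector_derivative[OF bounded_bilinear_scaleR dsig[OF s] dB[OF s]])
    also have "\<dots> = E2 s" by (simp add: Bfr[OF s] E2_def algebra_simps)
    finally show ?thesis .
  qed
  have key: "curvature e t * norm (vd e t) = \<bar>tau t\<bar> \<and> torsion e t * norm (vd e t) = sgn (sig t) * k t"
    if t: "t \<in> U" for t
  proof -
    have dst: "((\<lambda>s. sig s * tau s) has_vector_derivative (sig t * vd tau t + vd sig t * tau t)) (at t)"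
      by (rule bounded_bilinear.has_vector_derivative[OF bounded_bilinear_mult dsig[OF t] dtau[OF t]])
    have "(E2 has_vector_derivative
        ((vd sig t *\<^sub>R vd Bn t + vd (vd sig) t *\<^sub>R Bn t)
          - ((sig t * tau t) *\<^sub>R vd n t + (sig t * vd tau t + vd sig t * tau t) *\<^sub>R n t))) (at t)"
      unfolding E2_def
      by (intro has_vector_derivative_diff
          bounded_bilinear.has_vector_derivative[OF bounded_bilinear_scaleR dsig'[OF t] dB[OF t]]
          bounded_bilinear.has_vector_derivative[OF bounded_bilinear_scaleR dst dn[OF t]])
    then have "vd E2 t = (vd sig t *\<^sub>R vd Bn t + vd (vd sig) t *\<^sub>R Bn t)
          - ((sig t * tau t) *\<^sub>R vd n t + (sig t * vd tau t + vd sig t * tau t) *\<^sub>R n t)"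
      by (rule vd_eqI)
    moreover have "vd (vd (vd e)) t = vd E2 t"
      by (rule vd_cong[OF U t]) (rule e2)
    ultimately have e3T: "T t \<bullet> vd (vd (vd e)) t = sig t * tau t * k t"
      using Bfr[OF t] Nfr[OF t] TT[OF t] nT[OF t] BT[OF t]
      by (simp add: inner_diff_right inner_add_right inner_commute)
    have X: "cross3 (vd e t) (vd (vd e) t) = (sig t * (sig t * tau t)) *\<^sub>R T t"
    proof -
      have "cross3 (vd e t) (vd (vd e) t) = (- (sig t * (sig t * tau t))) *\<^sub>R cross3 (Bn t) (n t)"
        unfolding e1[OF t] e2[OF t] E2_def by (rule V3)
      also have "cross3 (Bn t) (n t) = - T t"
        using nn[OF t] nT[OF t] by (simp add: B_eq V2 inner_commute)
      finally show ?thesis by simp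
    qed
    have nT1: "norm (T t) = 1" using TT[OF t] by (simp add: norm_eq_1)
    have nB1: "norm (Bn t) = 1" using BB[OF t] by (simp add: norm_eq_1)
    have ne: "norm (vd e t) = \<bar>sig t\<bar>" using nB1 by (simp add: e1[OF t])
    have nX: "norm (cross3 (vd e t) (vd (vd e) t)) = \<bar>sig t * (sig t * tau t)\<bar>"
      using nT1 by (simp add: X)
    have s0: "sig t \<noteq> 0" using signz'[OF t] .
    have t0: "tau t \<noteq> 0" using taunz'[OF t] .
    have c1: "curvature e t * norm (vd e t) = \<bar>tau t\<bar>"
      unfolding curvature_def nX ne using s0
      by (cases "sig t > 0") (auto simp: abs_mult power3_eq_cube field_simps)
    have c2: "torsion e t * norm (vd e t) = sgn (sig t) * k t"
    proof -
      have "torsion e t = (sig t * (sig t * tau t)) * (sig t * tau t * k t) / (sig t * (sig t * tau t))\<^sup>2"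
        unfolding torsion_def nX X using e3T nT1 by (simp add: power2_abs)
      also have "\<dots> = k t / sig t" using s0 t0 by (simp add: field_simps power2_eq_square)
      finally have "torsion e t = k t / sig t" .
      then show ?thesis unfolding ne using s0
        by (cases "sig t > 0") (auto simp: field_simps)
    qed
    show ?thesis using c1 c2 by simp
  qed
  have neg: "negligible {a, b}" by (rule negligible_finite) simp
  have sub: "x \<in> U" if "x \<in> {a..b} - {a, b}" for x using that by (auto simp: U_def)
  show ?thesis
  proof
    show "integral {a..b} (\<lambda>t. curvature (evolute xi) t * norm (vd (evolute xi) t))
           = integral {a..b} (\<lambda>t. \<bar>fr_tau xi t\<bar>)"
      by (rule integral_spike[OF neg]) (use key sub in \<open>auto simp: e_def tau_def\<close>)
    show "integral {a..b} (\<lambda>t. torsion (evolute xi) t * norm (vd (evolute xi) t))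
           = integral {a..b} (\<lambda>t. sgn (fr_sigma xi t) * fr_k xi t)"
      by (rule integral_spike[OF neg]) (use key sub in \<open>auto simp: e_def sig_def k_def\<close>)
  qed
qed


end
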